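(* Suppose $\beta_j\ne0$ for $j=2,3,\dots,k$ in the Lanczos process. Then the optimal value $\mu^{(k)}$ of rLGopt satisfies $\mu^{(k)}<\lambda_{\min}(T_k)$, and rLGopt cannot fall into the hard case.
   Context: Let $M\in\mathbb{R}^{n\times n}$ be symmetric (in the paper $M=PAP$) and $0\ne b_0\in\mathbb{R}^n$, $\gamma>0$. Lanczos process: $q_0=0$, $\beta_1=\|b_0\|$, $q_1=b_0/\|b_0\|$, for $j=1,2,\dots$: $\alpha_j=q_j^{\top}Mq_j$, $\widehat q_{j+1}=Mq_j-\alpha_jq_j-\beta_jq_{j-1}$, $\beta_{j+1}=\|\widehat q_{j+1}\|$, $q_{j+1}=\widehat q_{j+1}/\beta_{j+1}$ when $\beta_{j+1}>0$. $T_k$ is the $k\times k$ symmetric tridiagonal matrix with diagonal $\alpha_1,\dots,\alpha_k$ and off-diagonal entries $\beta_2,\dots,\beta_k$. rLGopt: minimize $\lambda$ over $(\lambda,x)\in\mathbb{R}\times\mathbb{R}^k$ with $(T_k-\lambda I)x=-\|b_0\|e_1$ and $\|x\|=\gamma$; $\mu^{(k)}$ is its optimal value. The associated rQEPmin: minimize $\lambda$ over $\lambda\in\mathbb{R}$, $0\ne w\in\mathbb{R}^k$ with $(T_k-\lambda I)^2w=\gamma^{-2}\|b_0\|^2e_1e_1^{\top}w$. rLGopt is said to be in the hard case if rQEPmin has a minimizer $(\lambda,w)$ with $e_1^{\top}w=0$. *)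

theory Defs
  imports "Jordan_Normal_Form.Char_Poly"
begin

definition vnorm :: "real vec \<Rightarrow> real" where
  "vnorm v = sqrt (v \<bullet> v)"

(* lanczos_state M b j = (q_j, q_{j+1}, beta_{j+1}), with q_0 = 0, q_1 = b/||b||, beta_1 = ||b|| *)
fun lanczos_state :: "real mat \<Rightarrow> real vec \<Rightarrow> nat \<Rightarrow> real vec \<times> real vec \<times> real" where
  "lanczos_state M b 0 = (0\<^sub>v (dim_vec b), (1 / vnorm b) \<cdot>\<^sub>v b, vnorm b)"
| "lanczos_state M b (Suc j) =
     (let (p, q, \<beta>) = lanczos_state M b j;
          \<alpha> = q \<bullet> (M *\<^sub>v q);
          h = M *\<^sub>v q - \<alpha> \<cdot>\<^sub>v q - \<beta> \<cdot>\<^sub>v p;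
          \<beta>' = vnorm h
      in (q, (1 / \<beta>') \<cdot>\<^sub>v h, \<beta>'))"

definition lanczos_q :: "real mat \<Rightarrow> real vec \<Rightarrow> nat \<Rightarrow> real vec" where
  "lanczos_q M b j = fst (lanczos_state M b j)"

definition lanczos_alpha :: "real mat \<Rightarrow> real vec \<Rightarrow> nat \<Rightarrow> real" where
  "lanczos_alpha M b j = lanczos_q M b j \<bullet> (M *\<^sub>v lanczos_q M b j)"

definition lanczos_beta :: "real mat \<Rightarrow> real vec \<Rightarrow> nat \<Rightarrow> real" where
  "lanczos_beta M b j = snd (snd (lanczos_state M b (j - 1)))"

(* T_k, k x k symmetric tridiagonal; 0-based entry (i,j) is the 1-based entry (i+1,j+1) *)
definition lanczos_T :: "real mat \<Rightarrow> real vec \<Rightarrow> nat \<Rightarrow> real mat" where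
  "lanczos_T M b k = mat k k (\<lambda>(i, j).
      if i = j then lanczos_alpha M b (i + 1)
      else if i = j + 1 then lanczos_beta M b (i + 1)
      else if j = i + 1 then lanczos_beta M b (j + 1)
      else 0)"

definition lambda_min :: "real mat \<Rightarrow> real" where
  "lambda_min A = Min {e. eigenvalue A e}"

definition rLGopt_feasible :: "real mat \<Rightarrow> real \<Rightarrow> real \<Rightarrow> real \<Rightarrow> real vec \<Rightarrow> bool" where
  "rLGopt_feasible T nb \<gamma> mu x \<longleftrightarrow>
     x \<in> carrier_vec (dim_row T) \<and>
     (T - mu \<cdot>\<^sub>m 1\<^sub>m (dim_row T)) *\<^sub>v x = - (nb \<cdot>\<^sub>v unit_vec (dim_row T) 0) \<and>
     vnorm x = \<gamma>"

definition rLGopt_value :: "real mat \<Rightarrow> real \<Rightarrow> real \<Rightarrow> real" where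
  "rLGopt_value T nb \<gamma> = Inf {mu. \<exists>x. rLGopt_feasible T nb \<gamma> mu x}"

definition rQEP_feasible :: "real mat \<Rightarrow> real \<Rightarrow> real \<Rightarrow> real \<Rightarrow> real vec \<Rightarrow> bool" where
  "rQEP_feasible T nb \<gamma> mu w \<longleftrightarrow>
     w \<in> carrier_vec (dim_row T) \<and> w \<noteq> 0\<^sub>v (dim_row T) \<and>
     ((T - mu \<cdot>\<^sub>m 1\<^sub>m (dim_row T)) ^\<^sub>m 2) *\<^sub>v w =
       (nb\<^sup>2 / \<gamma>\<^sup>2) \<cdot>\<^sub>v ((unit_vec (dim_row T) 0 \<bullet> w) \<cdot>\<^sub>v unit_vec (dim_row T) 0)"

definition rLGopt_hard_case :: "real mat \<Rightarrow> real \<Rightarrow> real \<Rightarrow> bool" where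
  "rLGopt_hard_case T nb \<gamma> \<longleftrightarrow>
     (\<exists>mu w. rQEP_feasible T nb \<gamma> mu w \<and>
            (\<forall>mu' w'. rQEP_feasible T nb \<gamma> mu' w' \<longrightarrow> mu \<le> mu') \<and>
            unit_vec (dim_row T) 0 \<bullet> w = 0)"

end

theory Submission imports Defs "Jordan_Normal_Form.Spectral_Radius" begin

lemma mv_index:
  fixes A :: "'a::comm_ring_1 mat"
  assumes "A \<in> carrier_mat k k" "x \<in> carrier_vec k" "i < k"
  shows "(A *\<^sub>v x) $ i = (\<Sum>j<k. A $$ (i,j) * x $ j)"
  using assms by (auto simp: scalar_prod_def row_def lessThan_atLeast0 intro!: sum.cong)

lemma sym_real_eigenvalue:
  fixes T :: "real mat"
  assumes T: "T \<in> carrier_mat k k" and sym: "\<And>i j. i<k \<Longrightarrow> j<k \<Longrightarrow> T$$(i,j) = T$$(j,i)" and k: "k>0"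
  shows "\<exists>e. eigenvalue T e"
proof -
  let ?C = "map_mat complex_of_real T"
  have C: "?C \<in> carrier_mat k k" using T by auto
  from spectrum_non_empty[OF C k] obtain l where "eigenvalue ?C l" by (auto simp: spectrum_def)
  then obtain v where v: "v \<in> carrier_vec k" "v \<noteq> 0\<^sub>v k" "?C *\<^sub>v v = l \<cdot>\<^sub>v v"
    unfolding eigenvalue_def eigenvector_def using C by auto
  define a where "a = (\<lambda>i. Re (v$i))"
  define b where "b = (\<lambda>i. Im (v$i))"
  define p where "p = Re l"
  define q where "q = Im l"
  have ev: "(\<Sum>j<k. complex_of_real (T$$(i,j)) * v$j) = l * v$i" if i: "i<k" for i
  proof -
    have "(?C *\<^sub>v v)$i = (l \<cdot>\<^sub>v v)$i" using v by simp
    also have "(?C *\<^sub>v v)$i = (\<Sum>j<k. ?C $$ (i,j) * v $ j)" by (rule mv_index[OF C v(1) i])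
    also have "\<dots> = (\<Sum>j<k. complex_of_real (T$$(i,j)) * v$j)" using T i by (auto intro!: sum.cong)
    finally show ?thesis using i v by simp
  qed
  have ea: "(\<Sum>j<k. T$$(i,j) * a j) = p * a i - q * b i" if i: "i<k" for i
  proof -
    have "Re (\<Sum>j<k. complex_of_real (T$$(i,j)) * v$j) = Re (l * v$i)" using ev[OF i] by simp
    then show ?thesis by (simp add: Re_sum a_def b_def p_def q_def)
  qed
  have eb: "(\<Sum>j<k. T$$(i,j) * b j) = q * a i + p * b i" if i: "i<k" for i
  proof -
    have "Im (\<Sum>j<k. complex_of_real (T$$(i,j)) * v$j) = Im (l * v$i)" using ev[OF i] by simp
    then show ?thesis by (simp add: Im_sum a_def b_def p_def q_def algebra_simps)
  qed
  have swap: "(\<Sum>i<k. b i * (\<Sum>j<k. T$$(i,j)*a j)) = (\<Sum>i<k. a i * (\<Sum>j<k. T$$(i,j)*b j))"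
  proof -
    have "(\<Sum>i<k. b i * (\<Sum>j<k. T$$(i,j)*a j)) = (\<Sum>i<k. \<Sum>j<k. b i * T$$(i,j)*a j)"
      by (simp add: sum_distrib_left mult.assoc)
    also have "\<dots> = (\<Sum>j<k. \<Sum>i<k. b i * T$$(i,j)*a j)" by (rule sum.swap)
    also have "\<dots> = (\<Sum>j<k. a j * (\<Sum>i<k. T$$(j,i)*b i))"
      by (auto simp: sum_distrib_left sym intro!: sum.cong)
    finally show ?thesis .
  qed
  have "(\<Sum>i<k. b i * (p * a i - q * b i)) = (\<Sum>i<k. a i * (q * a i + p * b i))"
    using swap ea eb by simp
  hence qs: "q * (\<Sum>i<k. a i * a i + b i * b i) = 0"
    by (simp add: algebra_simps sum.distrib sum_subtractf sum_distrib_left)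
  obtain i where i: "i < k" "v $ i \<noteq> 0"
    using v by (metis eq_vecI carrier_vecD index_zero_vec(1) index_zero_vec(2))
  have nz: "a i \<noteq> 0 \<or> b i \<noteq> 0" using i(2) unfolding a_def b_def using complex_eqI by force
  have pos: "(\<Sum>i<k. a i * a i + b i * b i) > 0"
    using i nz by (intro sum_pos2[of _ i]) (auto simp: sum_squares_gt_zero_iff)
  have q0: "q = 0" using qs pos by simp
  show ?thesis
  proof (cases "a i \<noteq> 0")
    case True
    hence "a i \<noteq> 0" .
    hence "a i \<noteq> 0" .
    have "vec k a \<noteq> 0\<^sub>v k" using i \<open>a i \<noteq> 0\<close> by (metis index_vec index_zero_vec(1))
    have "eigenvector T (vec k a) p" unfolding eigenvector_def
      using T i True ea q0 \<open>vec k a \<noteq> 0\<^sub>v k\<close> by (auto intro!: eq_vecI simp: mv_index[OF T])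
    then show ?thesis unfolding eigenvalue_def by blast
  next
    case False
    hence "b i \<noteq> 0" using nz by auto
    have "vec k b \<noteq> 0\<^sub>v k" using i \<open>b i \<noteq> 0\<close> by (metis index_vec index_zero_vec(1))
    have "eigenvector T (vec k b) p" unfolding eigenvector_def
      using T i eb q0 \<open>vec k b \<noteq> 0\<^sub>v k\<close> by (auto intro!: eq_vecI simp: mv_index[OF T])
    then show ?thesis unfolding eigenvalue_def by blast
  qed
qed

lemma det_isCont:
  fixes F :: "real \<Rightarrow> real mat"
  assumes F: "\<And>mu. F mu \<in> carrier_mat n n"
    and c: "\<And>i j. i<n \<Longrightarrow> j<n \<Longrightarrow> isCont (\<lambda>mu. F mu $$ (i,j)) x"
  shows "isCont (\<lambda>mu. det (F mu)) x"
proof -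
  have eq: "(\<lambda>mu. det (F mu)) = (\<lambda>mu. \<Sum>p\<in>{p. p permutes {0..<n}}. signof p * (\<Prod>i=0..<n. F mu $$ (i, p i)))"
    using F by (auto simp: det_def')
  show ?thesis unfolding eq
  proof (intro continuous_intros c)
    fix p i assume "p \<in> {p. p permutes {0..<n}}" "i \<in> {0..<n}"
    then show "i < n" "p i < n" using permutes_in_image by fastforce+
  qed
qed

lemma tri_kernel:
  fixes B :: "nat \<Rightarrow> nat \<Rightarrow> real" and w :: "nat \<Rightarrow> real"
  assumes row: "\<And>i. i<k \<Longrightarrow> (\<Sum>j<k. B i j * w j) = 0"
    and tri: "\<And>i j. i<k \<Longrightarrow> j<k \<Longrightarrow> Suc i < j \<Longrightarrow> B i j = 0"
    and sup: "\<And>i. Suc i < k \<Longrightarrow> B i (Suc i) \<noteq> 0"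
    and w0: "w 0 = 0"
  shows "\<forall>i<k. w i = 0"
proof -
  have "\<forall>j\<le>i. j < k \<longrightarrow> w j = 0" for i
  proof (induction i)
    case 0 then show ?case using w0 by auto
  next
    case (Suc i)
    show ?case
    proof (intro allI impI)
      fix j assume j: "j \<le> Suc i" "j < k"
      show "w j = 0"
      proof (cases "j \<le> i")
        case True then show ?thesis using Suc j by auto
      next
        case False
        hence jj: "j = Suc i" using j by auto
        have ik: "i < k" using j jj by auto
        have "0 = (\<Sum>l<k. B i l * w l)" using row[OF ik] by simp
        also have "\<dots> = B i (Suc i) * w (Suc i) + (\<Sum>l\<in>{..<k} - {Suc i}. B i l * w l)"
          using j jj by (subst sum.remove[of _ "Suc i"]) auto
        also have "(\<Sum>l\<in>{..<k} - {Suc i}. B i l * w l) = 0"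
        proof (rule sum.neutral, intro ballI)
          fix l assume l: "l \<in> {..<k} - {Suc i}"
          show "B i l * w l = 0"
          proof (cases "l \<le> i")
            case True then show ?thesis using Suc l by auto
          next
            case False then show ?thesis using l tri ik by auto
          qed
        qed
        finally have "B i (Suc i) * w (Suc i) = 0" by simp
        then show ?thesis using sup j jj by auto
      qed
    qed
  qed
  then show ?thesis by auto
qed

lemma quad_bound:
  fixes T :: "nat \<Rightarrow> nat \<Rightarrow> real" and x :: "nat \<Rightarrow> real"
  shows "\<bar>\<Sum>i<k. x i * (\<Sum>j<k. T i j * x j)\<bar> \<le> (\<Sum>i<k. \<Sum>j<k. \<bar>T i j\<bar>) * (\<Sum>i<k. (x i)\<^sup>2)"
proof -
  let ?S = "\<Sum>i<k. (x i)\<^sup>2"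
  have xs: "(x i)\<^sup>2 \<le> ?S" if "i < k" for i
    using that by (intro member_le_sum) auto
  have "\<bar>\<Sum>i<k. x i * (\<Sum>j<k. T i j * x j)\<bar> = \<bar>\<Sum>i<k. \<Sum>j<k. T i j * (x i * x j)\<bar>"
    by (simp add: sum_distrib_left algebra_simps)
  also have "\<dots> \<le> (\<Sum>i<k. \<Sum>j<k. \<bar>T i j * (x i * x j)\<bar>)"
    by (rule order.trans[OF sum_abs]) (intro sum_mono sum_abs)
  also have "\<dots> \<le> (\<Sum>i<k. \<Sum>j<k. \<bar>T i j\<bar> * ?S)"
  proof (intro sum_mono)
    fix i j assume i: "i \<in> {..<k}" and j: "j \<in> {..<k}"
    have "\<bar>x i * x j\<bar> \<le> ((x i)\<^sup>2 + (x j)\<^sup>2) / 2"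
    proof -
      have "0 \<le> (\<bar>x i\<bar> - \<bar>x j\<bar>)\<^sup>2" by simp
      then show ?thesis by (simp add: power2_eq_square algebra_simps abs_mult)
    qed
    also have "\<dots> \<le> ?S"
    proof -
      have "(x i)\<^sup>2 + (x j)\<^sup>2 \<le> ?S + ?S" using xs i j by (intro add_mono) auto
      then show ?thesis by simp
    qed
    finally show "\<bar>T i j * (x i * x j)\<bar> \<le> \<bar>T i j\<bar> * ?S"
      by (simp add: abs_mult mult_left_mono)
  qed
  also have "\<dots> = (\<Sum>i<k. \<Sum>j<k. \<bar>T i j\<bar>) * ?S" by (simp add: sum_distrib_right)
  finally show ?thesis .
qed


definition Am :: "real mat \<Rightarrow> nat \<Rightarrow> real \<Rightarrow> real mat" where
  "Am T k mu = T - mu \<cdot>\<^sub>m 1\<^sub>m k"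

context
  fixes T :: "real mat" and k :: nat and c \<gamma> :: real
  assumes T: "T \<in> carrier_mat k k"
    and sym: "\<And>i j. i<k \<Longrightarrow> j<k \<Longrightarrow> T$$(i,j) = T$$(j,i)"
    and tri: "\<And>i j. i<k \<Longrightarrow> j<k \<Longrightarrow> Suc i < j \<Longrightarrow> T$$(i,j) = 0"
    and sub: "\<And>i. Suc i < k \<Longrightarrow> T$$(Suc i, i) \<noteq> 0"
    and k1: "k \<ge> 1" and cpos: "c > 0" and gpos: "\<gamma> > 0"
begin

lemma Am_carrier[simp]: "Am T k mu \<in> carrier_mat k k"
  unfolding Am_def by (rule minus_carrier_mat) simp

lemma Am_dims[simp]: "dim_row (Am T k mu) = k" "dim_col (Am T k mu) = k"
  using carrier_matD[OF Am_carrier[of mu]] by auto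

lemma Am_index: "i<k \<Longrightarrow> j<k \<Longrightarrow> Am T k mu $$ (i,j) = T$$(i,j) - (if i = j then mu else 0)"
  using T by (simp add: Am_def)

lemma Am_row: "x \<in> carrier_vec k \<Longrightarrow> i < k \<Longrightarrow>
   (Am T k mu *\<^sub>v x) $ i = (\<Sum>j<k. T$$(i,j) * x$j) - mu * x$i"
proof -
  assume x: "x \<in> carrier_vec k" and i: "i < k"
  have "(Am T k mu *\<^sub>v x) $ i = (\<Sum>j<k. Am T k mu $$ (i,j) * x$j)"
    by (rule mv_index[OF Am_carrier x i])
  also have "\<dots> = (\<Sum>j<k. T$$(i,j) * x$j - (if i = j then mu * x$j else 0))"
    using i by (intro sum.cong) (auto simp: Am_index algebra_simps)
  also have "\<dots> = (\<Sum>j<k. T$$(i,j) * x$j) - mu * x$i"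
    using i by (simp add: sum_subtractf)
  finally show ?thesis .
qed

lemma not_hard: "\<not> rLGopt_hard_case T c \<gamma>"
proof
  assume "rLGopt_hard_case T c \<gamma>"
  then obtain mu w where f: "rQEP_feasible T c \<gamma> mu w" and w0: "unit_vec (dim_row T) 0 \<bullet> w = 0"
    unfolding rLGopt_hard_case_def by blast
  have dr: "dim_row T = k" using T by simp
  let ?A = "Am T k mu"
  from f have w: "w \<in> carrier_vec k" "w \<noteq> 0\<^sub>v k"
    and eq: "(?A ^\<^sub>m 2) *\<^sub>v w = (c\<^sup>2 / \<gamma>\<^sup>2) \<cdot>\<^sub>v ((unit_vec k 0 \<bullet> w) \<cdot>\<^sub>v unit_vec k 0)"
    unfolding rQEP_feasible_def dr Am_def by auto
  have w00: "w $ 0 = 0" using w0 w k1 dr by (simp add: scalar_prod_left_unit)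
  have pow: "?A ^\<^sub>m 2 = ?A * ?A" by (simp add: numeral_2_eq_2)
  define y where "y = ?A *\<^sub>v w"
  have y: "y \<in> carrier_vec k" unfolding y_def using w by (simp add: mult_mat_vec_carrier[OF Am_carrier])
  have "?A *\<^sub>v y = (?A * ?A) *\<^sub>v w" unfolding y_def
    by (rule assoc_mult_mat_vec[symmetric, OF Am_carrier Am_carrier w(1)])
  also have "\<dots> = (c\<^sup>2 / \<gamma>\<^sup>2) \<cdot>\<^sub>v (0 \<cdot>\<^sub>v unit_vec k 0)" using eq pow w0 dr by simp
  also have "\<dots> = 0\<^sub>v k" by (intro eq_vecI) auto
  finally have Ay: "?A *\<^sub>v y = 0\<^sub>v k" .
  have dA: "dim_row ?A = k" "dim_col ?A = k" using carrier_matD[OF Am_carrier[of mu]] by auto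
  have At: "transpose_mat ?A = ?A"
    by (rule eq_matI) (auto simp: Am_index sym dA)
  have "(transpose_mat ?A *\<^sub>v w) \<bullet> y = w \<bullet> (?A *\<^sub>v y)"
    by (rule transpose_vec_mult_scalar[OF Am_carrier y w(1)])
  hence "y \<bullet> y = 0" using At Ay w unfolding y_def by simp
  hence "(\<Sum>i<k. y$i * y$i) = 0" using y by (simp add: scalar_prod_def lessThan_atLeast0)
  hence yi: "\<forall>i\<in>{..<k}. y$i * y$i = 0"
    by (subst sum_nonneg_eq_0_iff[symmetric]) auto
  have "\<forall>i<k. w$i = 0"
  proof (rule tri_kernel[where B = "\<lambda>i j. ?A $$ (i,j)"])
    fix i assume i: "i < k"
    have "y $ i = (\<Sum>j<k. ?A $$ (i,j) * w$j)" unfolding y_def by (rule mv_index[OF Am_carrier w(1) i])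
    then show "(\<Sum>j<k. ?A $$ (i,j) * w$j) = 0" using yi i by simp
  next
    fix i j assume "i<k" "j<k" "Suc i < j" then show "?A $$ (i,j) = 0" by (simp add: Am_index tri)
  next
    fix i assume i: "Suc i < k" then show "?A $$ (i, Suc i) \<noteq> 0" using sub[OF i] sym[of "Suc i" i]
      by (simp add: Am_index)
  qed (rule w00)
  hence "w = 0\<^sub>v k" using w by (intro eq_vecI) auto
  then show False using w by simp
qed


lemma mm_index: "A \<in> carrier_mat k k \<Longrightarrow> B \<in> carrier_mat k k \<Longrightarrow> i < k \<Longrightarrow> j < k \<Longrightarrow>
   (A * B) $$ (i,j) = (\<Sum>l<k. A $$ (i,l) * B $$ (l,j))"
  by (auto simp: scalar_prod_def row_def col_def lessThan_atLeast0 intro!: sum.cong)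

lemma D_cont: "isCont (\<lambda>mu. det (Am T k mu)) x"
proof (rule det_isCont[where F = "\<lambda>mu. Am T k mu" and n = k])
  fix i j assume ij: "i<k" "j<k"
  then have "(\<lambda>mu. Am T k mu $$ (i,j)) = (\<lambda>mu. T$$(i,j) - (if i = j then mu else 0))"
    by (auto simp: Am_index)
  then show "isCont (\<lambda>mu. Am T k mu $$ (i,j)) x" by (cases "i=j") auto
qed simp

lemma cof_cont: assumes i: "i<k" shows "isCont (\<lambda>mu. cofactor (Am T k mu) 0 i) x"
  unfolding cofactor_def
proof (intro continuous_intros det_isCont[where F = "\<lambda>mu. mat_delete (Am T k mu) 0 i" and n = "k-1"])
  fix mu show "mat_delete (Am T k mu) 0 i \<in> carrier_mat (k - 1) (k - 1)"
    by (rule mat_delete_carrier[OF Am_carrier])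
next
  fix a b assume ab: "a < k-1" "b < k-1"
  let ?j = "if b < i then b else Suc b"
  have j: "?j < k" using ab by auto
  have "(\<lambda>mu. mat_delete (Am T k mu) 0 i $$ (a,b)) = (\<lambda>mu. Am T k mu $$ (Suc a, ?j))"
    using ab by (auto simp: mat_delete_def)
  also have "\<dots> = (\<lambda>mu. T$$(Suc a, ?j) - (if Suc a = ?j then mu else 0))"
    using ab j by (auto simp: Am_index simp del: if_image_distrib)
  finally show "isCont (\<lambda>mu. mat_delete (Am T k mu) 0 i $$ (a,b)) x"
    by (cases "Suc a = ?j") auto
qed

lemma cof_last: "cofactor (Am T k mu) 0 (k-1) = (-1)^(k-1) * prod_list (map (\<lambda>i. T$$(Suc i, i)) [0..<k-1])"
proof -
  let ?B = "mat_delete (Am T k mu) 0 (k-1)"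
  have B: "?B \<in> carrier_mat (k-1) (k-1)" by (rule mat_delete_carrier[OF Am_carrier])
  have Bi: "?B $$ (a,b) = T$$(Suc a, b) - (if Suc a = b then mu else 0)" if ab: "a < k-1" "b < k-1" for a b
  proof -
    have "?B $$ (a,b) = Am T k mu $$ (Suc a, b)" using ab by (auto simp: mat_delete_def)
    also have "\<dots> = T$$(Suc a, b) - (if Suc a = b then mu else 0)" using ab by (intro Am_index) auto
    finally show ?thesis .
  qed
  have ut: "upper_triangular ?B" unfolding upper_triangular_def
  proof (intro allI impI)
    fix a b assume a: "a < dim_row ?B" and b: "b < a"
    have a': "a < k-1" using a B by auto
    have "T$$(Suc a, b) = T$$(b, Suc a)" using a' b by (intro sym) auto
    also have "\<dots> = 0" using a' b by (intro tri) auto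
    finally show "?B $$ (a,b) = 0" using Bi[of a b] a' b by auto
  qed
  have "det ?B = prod_list (diag_mat ?B)" by (rule det_upper_triangular[OF ut B])
  also have "diag_mat ?B = map (\<lambda>i. T$$(Suc i, i)) [0..<k-1]"
    unfolding diag_mat_def using B Bi by (auto intro!: map_cong)
  finally show ?thesis unfolding cofactor_def by simp
qed

lemma P_nz: "prod_list (map (\<lambda>i. T$$(Suc i, i)) [0..<k-1]) \<noteq> 0"
  using sub by (auto simp: prod_list_zero_iff)

lemma xv_eq:
  assumes d: "det (Am T k mu) \<noteq> 0"
  shows "Am T k mu *\<^sub>v vec k (\<lambda>i. (- c / det (Am T k mu)) * cofactor (Am T k mu) 0 i) = - (c \<cdot>\<^sub>v unit_vec k 0)"
proof -
  let ?A = "Am T k mu" let ?d = "det (Am T k mu)"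
  let ?x = "vec k (\<lambda>i. (- c / ?d) * cofactor ?A 0 i)"
  have x: "?x \<in> carrier_vec k" by simp
  have adj: "adj_mat ?A \<in> carrier_mat k k" "?A * adj_mat ?A = ?d \<cdot>\<^sub>m 1\<^sub>m k"
    using adj_mat[OF Am_carrier] by auto
  have dA: "dim_row ?A = k" "dim_col ?A = k" using carrier_matD[OF Am_carrier[of mu]] by auto
  have k0: "0 < k" using k1 by auto
  show ?thesis
  proof (rule eq_vecI)
    fix i assume "i < dim_vec (- (c \<cdot>\<^sub>v unit_vec k 0))"
    hence i: "i < k" by simp
    have "(?A *\<^sub>v ?x) $ i = (\<Sum>j<k. ?A $$ (i,j) * ((- c / ?d) * cofactor ?A 0 j))"
      using mv_index[OF Am_carrier x i] by simp
    also have "\<dots> = (- c / ?d) * (\<Sum>j<k. ?A $$ (i,j) * adj_mat ?A $$ (j,0))"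
      unfolding sum_distrib_left using k0 dA by (intro sum.cong) (auto simp: adj_mat_def)
    also have "(\<Sum>j<k. ?A $$ (i,j) * adj_mat ?A $$ (j,0)) = (?A * adj_mat ?A) $$ (i,0)"
      using mm_index[OF Am_carrier adj(1) i k0] by simp
    also have "\<dots> = ?d * (if i = 0 then 1 else 0)" using adj(2) i k0 by simp
    finally show "(?A *\<^sub>v ?x) $ i = (- (c \<cdot>\<^sub>v unit_vec k 0)) $ i" using d i by auto
  qed simp
qed

lemma feas_key:
  assumes x: "x \<in> carrier_vec k" and eq: "Am T k mu *\<^sub>v x = - (c \<cdot>\<^sub>v unit_vec k 0)"
  shows "(\<Sum>i<k. x$i * (\<Sum>j<k. T$$(i,j) * x$j)) - mu * (\<Sum>i<k. (x$i)\<^sup>2) = - c * x$0"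
proof -
  have row: "(\<Sum>j<k. T$$(i,j) * x$j) = mu * x$i - (if i = 0 then c else 0)" if i: "i<k" for i
  proof -
    have "(Am T k mu *\<^sub>v x) $ i = (- (c \<cdot>\<^sub>v unit_vec k 0)) $ i" using eq by simp
    then show ?thesis using Am_row[OF x i] i by auto
  qed
  have "(\<Sum>i<k. x$i * (\<Sum>j<k. T$$(i,j) * x$j)) = (\<Sum>i<k. mu * (x$i)\<^sup>2 - (if i = 0 then c * x$0 else 0))"
  proof (rule sum.cong[OF refl])
    fix i assume "i \<in> {..<k}" hence i: "i < k" by simp
    have "x$i * (\<Sum>j<k. T$$(i,j) * x$j) = x$i * (mu * x$i - (if i = 0 then c else 0))"
      by (simp only: row[OF i])
    also have "\<dots> = mu * (x$i)\<^sup>2 - (if i = 0 then c * x$0 else 0)"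
      by (auto simp: power2_eq_square algebra_simps)
    finally show "x$i * (\<Sum>j<k. T$$(i,j) * x$j) = mu * (x$i)\<^sup>2 - (if i = 0 then c * x$0 else 0)" .
  qed
  also have "\<dots> = mu * (\<Sum>i<k. (x$i)\<^sup>2) - c * x$0"
    using k1 by (simp add: sum_subtractf sum_distrib_left)
  finally show ?thesis by simp
qed

lemma vnorm_sq: "x \<in> carrier_vec k \<Longrightarrow> vnorm x = sqrt (\<Sum>i<k. (x$i)\<^sup>2)"
  by (simp add: vnorm_def scalar_prod_def lessThan_atLeast0 power2_eq_square)

lemma x0_bound: "x \<in> carrier_vec k \<Longrightarrow> \<bar>x$0\<bar> \<le> vnorm x"
proof -
  assume x: "x \<in> carrier_vec k"
  have "(x$0)\<^sup>2 \<le> (\<Sum>i<k. (x$i)\<^sup>2)" using k1 by (intro member_le_sum) auto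
  hence "sqrt ((x$0)\<^sup>2) \<le> sqrt (\<Sum>i<k. (x$i)\<^sup>2)" by (rule real_sqrt_le_mono)
  then show ?thesis using vnorm_sq[OF x] by simp
qed

lemma lin_help: "- (a::real) \<le> K * s \<Longrightarrow> m = p - a \<Longrightarrow> p \<le> q \<Longrightarrow> m \<le> q + K * s"
  by linarith

definition "KT = (\<Sum>i<k. \<Sum>j<k. \<bar>T$$(i,j)\<bar>)"

lemma feas_lb:
  assumes x: "x \<in> carrier_vec k" and eq: "Am T k mu *\<^sub>v x = - (c \<cdot>\<^sub>v unit_vec k 0)"
    and n: "vnorm x = \<gamma>"
  shows "- KT - c / \<gamma> \<le> mu"
proof -
  let ?S = "\<Sum>i<k. (x$i)\<^sup>2"
  let ?Q = "\<Sum>i<k. x$i * (\<Sum>j<k. T$$(i,j) * x$j)"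
  have S0: "?S \<ge> 0" by (intro sum_nonneg) auto
  have S: "?S = \<gamma>\<^sup>2" using n vnorm_sq[OF x] S0 by (metis real_sqrt_pow2)
  have Q: "\<bar>?Q\<bar> \<le> KT * ?S" unfolding KT_def by (rule quad_bound)
  have key: "?Q - mu * ?S = - c * x$0" by (rule feas_key[OF x eq])
  have x0: "\<bar>x$0\<bar> \<le> \<gamma>" using x0_bound[OF x] n by simp
  have "- \<gamma> \<le> x$0" using x0 by linarith
  hence cx: "c * (- \<gamma>) \<le> c * x$0" using cpos by (intro mult_left_mono) auto
  have Ql: "- (KT * ?S) \<le> ?Q" using Q by linarith
  have ms: "mu * ?S = ?Q + c * x$0" using key by linarith
  have "mu * \<gamma>\<^sup>2 \<ge> - KT * \<gamma>\<^sup>2 - c * \<gamma>" using Ql ms cx unfolding S by simp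
  moreover have "(- KT - c / \<gamma>) * \<gamma>\<^sup>2 = - KT * \<gamma>\<^sup>2 - c * \<gamma>" using gpos
    by (simp add: power2_eq_square field_simps)
  ultimately have "(- KT - c / \<gamma>) * \<gamma>\<^sup>2 \<le> mu * \<gamma>\<^sup>2" by simp
  then show ?thesis using gpos by (simp add: mult_le_cancel_right)
qed

lemma feas_small:
  assumes x: "x \<in> carrier_vec k" and eq: "Am T k mu *\<^sub>v x = - (c \<cdot>\<^sub>v unit_vec k 0)"
    and mu: "mu \<le> - KT - 2 * c / \<gamma>"
  shows "vnorm x < \<gamma>"
proof (rule ccontr)
  assume "\<not> vnorm x < \<gamma>"
  hence rg: "vnorm x \<ge> \<gamma>" by simp
  let ?r = "vnorm x"
  let ?S = "\<Sum>i<k. (x$i)\<^sup>2"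
  let ?Q = "\<Sum>i<k. x$i * (\<Sum>j<k. T$$(i,j) * x$j)"
  have S0: "?S \<ge> 0" by (intro sum_nonneg) auto
  have S: "?S = ?r\<^sup>2" using vnorm_sq[OF x] S0 by simp
  have Q: "\<bar>?Q\<bar> \<le> KT * ?S" unfolding KT_def by (rule quad_bound)
  have key: "?Q - mu * ?S = - c * x$0" by (rule feas_key[OF x eq])
  have x0: "\<bar>x$0\<bar> \<le> ?r" using x0_bound[OF x] by simp
  have "- x$0 \<le> ?r" using x0 by linarith
  hence cx: "c * (- x$0) \<le> c * ?r" using cpos by (intro mult_left_mono) auto
  have Ql: "- ?Q \<le> KT * ?S" using Q by linarith
  have ms: "(- mu) * ?S = c * (- x$0) - ?Q" using key by (simp add: algebra_simps)
  have h1: "(- mu) * ?r\<^sup>2 \<le> c * ?r + KT * ?r\<^sup>2" using lin_help[OF Ql[unfolded S] ms[unfolded S] cx] .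
  have h2: "(KT + 2 * c / \<gamma>) * ?r\<^sup>2 \<le> (- mu) * ?r\<^sup>2" using mu by (intro mult_right_mono) auto
  have rr: "?r / \<gamma> \<ge> 1" using rg gpos by simp
  have h3: "2 * c / \<gamma> * ?r\<^sup>2 = 2 * c * ?r * (?r / \<gamma>)" by (simp add: power2_eq_square)
  have h4: "2 * c * ?r * (?r / \<gamma>) \<ge> 2 * c * ?r * 1"
    using rr cpos rg gpos by (intro mult_left_mono) auto
  have h5: "(KT + 2 * c / \<gamma>) * ?r\<^sup>2 = KT * ?r\<^sup>2 + 2 * c / \<gamma> * ?r\<^sup>2"
    by (simp add: algebra_simps)
  have h6: "2 * c * ?r * 1 = 2 * (c * ?r)" by simp
  have "c * ?r > 0" using cpos rg gpos by simp
  then show False using h1 h2 h3 h4 h5 h6 by linarith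
qed


lemma part1: "rLGopt_value T c \<gamma> < lambda_min T"
proof -
  have dr: "dim_row T = k" using T by simp
  let ?E = "{e. eigenvalue T e}"
  have fin: "finite ?E" using card_finite_spectrum(1)[OF T] by (simp add: spectrum_def)
  have ne: "?E \<noteq> {}" using sym_real_eigenvalue[OF T sym] k1 by auto
  define lm where "lm = Min ?E"
  have lmE: "eigenvalue T lm" using Min_in[OF fin ne] unfolding lm_def by simp
  have lm_le: "eigenvalue T e \<Longrightarrow> lm \<le> e" for e using Min_le[OF fin] unfolding lm_def by simp
  have cm: "char_matrix T e = Am T k e" for e
    unfolding char_matrix_def Am_def dr using T by (intro eq_matI) auto
  have eigD: "eigenvalue T e \<longleftrightarrow> det (Am T k e) = 0" for e
    using eigenvalue_det[OF T, of e] cm by simp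
  have Dlm: "det (Am T k lm) = 0" using lmE eigD by simp
  have Dnz: "mu < lm \<Longrightarrow> det (Am T k mu) \<noteq> 0" for mu using eigD lm_le by force
  define P where "P = prod_list (map (\<lambda>i. T$$(Suc i, i)) [0..<k-1])"
  have P: "P \<noteq> 0" unfolding P_def by (rule P_nz)
  define r where "r = c * \<bar>P\<bar> / \<gamma>"
  have r: "r > 0" unfolding r_def using P cpos gpos by simp
  have lim: "(\<lambda>mu. det (Am T k mu)) \<midarrow>lm\<rightarrow> det (Am T k lm)" using D_cont[of lm] unfolding isCont_def .
  from LIM_D[OF lim r] obtain s where s: "s > 0"
    and sD: "\<And>x. x \<noteq> lm \<and> norm (x - lm) < s \<longrightarrow> norm (det (Am T k x) - det (Am T k lm)) < r" by blast
  define mu1 where "mu1 = lm - s/2"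
  have mu1: "mu1 < lm" unfolding mu1_def using s by simp
  have D1: "\<bar>det (Am T k mu1)\<bar> < r" using sD[of mu1] s Dlm unfolding mu1_def by auto
  have D1nz: "det (Am T k mu1) \<noteq> 0" using Dnz[OF mu1] .
  define G where "G mu = (\<Sum>i<k. ((- c / det (Am T k mu)) * cofactor (Am T k mu) 0 i)\<^sup>2)" for mu
  define xv where "xv mu = vec k (\<lambda>i. (- c / det (Am T k mu)) * cofactor (Am T k mu) 0 i)" for mu
  have xv: "xv mu \<in> carrier_vec k" for mu unfolding xv_def by simp
  have vG: "vnorm (xv mu) = sqrt (G mu)" for mu
    using vnorm_sq[OF xv[of mu]] unfolding G_def xv_def by simp
  have G0: "G mu \<ge> 0" for mu unfolding G_def by (intro sum_nonneg) auto
  have xeq: "det (Am T k mu) \<noteq> 0 \<Longrightarrow> Am T k mu *\<^sub>v xv mu = - (c \<cdot>\<^sub>v unit_vec k 0)" for mu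
    unfolding xv_def by (rule xv_eq)
  have G1: "G mu1 > \<gamma>\<^sup>2"
  proof -
    let ?d = "det (Am T k mu1)"
    have "((- c / ?d) * cofactor (Am T k mu1) 0 (k-1))\<^sup>2 \<le> G mu1"
      unfolding G_def using k1 by (intro member_le_sum) auto
    also have "((- c / ?d) * cofactor (Am T k mu1) 0 (k-1))\<^sup>2 = (c * \<bar>P\<bar> / \<bar>?d\<bar>)\<^sup>2"
      unfolding cof_last P_def[symmetric]
      by (simp add: power2_eq_square power_mult_distrib abs_mult field_simps)
    finally have a: "(c * \<bar>P\<bar> / \<bar>?d\<bar>)\<^sup>2 \<le> G mu1" .
    have "\<gamma> * \<bar>?d\<bar> < \<gamma> * r" using D1 gpos by simp
    also have "\<gamma> * r = c * \<bar>P\<bar>" unfolding r_def using gpos by simp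
    finally have "\<gamma> < c * \<bar>P\<bar> / \<bar>?d\<bar>" using D1nz by (simp add: field_simps)
    hence "\<gamma>\<^sup>2 < (c * \<bar>P\<bar> / \<bar>?d\<bar>)\<^sup>2" using gpos by (intro power_strict_mono) auto
    then show ?thesis using a by simp
  qed
  define mu0 where "mu0 = min (- KT - 2 * c / \<gamma>) (mu1 - 1)"
  have mu01: "mu0 \<le> mu1" unfolding mu0_def by simp
  have mu0l: "mu0 < lm" using mu1 unfolding mu0_def by simp
  have G0': "G mu0 < \<gamma>\<^sup>2"
  proof -
    have "vnorm (xv mu0) < \<gamma>"
      by (rule feas_small[OF xv xeq[OF Dnz[OF mu0l]]]) (simp add: mu0_def)
    hence "sqrt (G mu0) < \<gamma>" using vG by simp
    hence "(sqrt (G mu0))\<^sup>2 < \<gamma>\<^sup>2" using G0[of mu0] by (intro power_strict_mono) auto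
    then show ?thesis using G0[of mu0] by simp
  qed
  have cont: "continuous_on {mu0..mu1} G"
  proof (rule continuous_at_imp_continuous_on, intro ballI)
    fix mu assume "mu \<in> {mu0..mu1}"
    hence "mu < lm" using mu1 by auto
    hence d: "det (Am T k mu) \<noteq> 0" by (rule Dnz)
    show "isCont G mu" unfolding G_def
      by (intro continuous_intros D_cont cof_cont d) auto
  qed
  obtain mus where mus: "mu0 \<le> mus" "mus \<le> mu1" "G mus = \<gamma>\<^sup>2"
    using IVT'[of G mu0 "\<gamma>\<^sup>2" mu1, OF less_imp_le[OF G0'] less_imp_le[OF G1] mu01 cont] by blast
  have musl: "mus < lm" using mus mu1 by simp
  have feas: "rLGopt_feasible T c \<gamma> mus (xv mus)"
    unfolding rLGopt_feasible_def dr
  proof (intro conjI)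
    show "xv mus \<in> carrier_vec k" by (rule xv)
    show "(T - mus \<cdot>\<^sub>m 1\<^sub>m k) *\<^sub>v xv mus = - (c \<cdot>\<^sub>v unit_vec k 0)"
      using xeq[OF Dnz[OF musl]] unfolding Am_def .
    show "vnorm (xv mus) = \<gamma>" using vG mus(3) gpos by simp
  qed
  have bdd: "bdd_below {mu. \<exists>x. rLGopt_feasible T c \<gamma> mu x}"
  proof (rule bdd_belowI[of _ "- KT - c / \<gamma>"])
    fix mu assume "mu \<in> {mu. \<exists>x. rLGopt_feasible T c \<gamma> mu x}"
    then obtain x where "rLGopt_feasible T c \<gamma> mu x" by blast
    hence x: "x \<in> carrier_vec k" "Am T k mu *\<^sub>v x = - (c \<cdot>\<^sub>v unit_vec k 0)" "vnorm x = \<gamma>"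
      unfolding rLGopt_feasible_def dr Am_def by auto
    show "- KT - c / \<gamma> \<le> mu" by (rule feas_lb[OF x])
  qed
  have "rLGopt_value T c \<gamma> \<le> mus"
    unfolding rLGopt_value_def using feas bdd by (intro cInf_lower) auto
  also have "\<dots> < lm" by (rule musl)
  finally show ?thesis unfolding lambda_min_def lm_def .
qed

end


theorem theorem3p1:
  fixes M :: "real mat" and b :: "real vec" and \<gamma> :: real and n k :: nat
  assumes "M \<in> carrier_mat n n" and "transpose_mat M = M"
    and "b \<in> carrier_vec n" and "b \<noteq> 0\<^sub>v n"
    and "\<gamma> > 0" and "k \<ge> 1"
    and "\<forall>j \<in> {2..k}. lanczos_beta M b j \<noteq> 0"
  shows "rLGopt_value (lanczos_T M b k) (vnorm b) \<gamma> < lambda_min (lanczos_T M b k)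
     \<and> \<not> rLGopt_hard_case (lanczos_T M b k) (vnorm b) \<gamma>"
proof -
  let ?T = "lanczos_T M b k"
  have T: "?T \<in> carrier_mat k k" unfolding lanczos_T_def by simp
  have sym: "?T $$ (i,j) = ?T $$ (j,i)" if "i<k" "j<k" for i j
    using that unfolding lanczos_T_def by auto
  have tri: "?T $$ (i,j) = 0" if "i<k" "j<k" "Suc i < j" for i j
    using that unfolding lanczos_T_def by auto
  have sub: "?T $$ (Suc i, i) \<noteq> 0" if "Suc i < k" for i
  proof -
    have "?T $$ (Suc i, i) = lanczos_beta M b (Suc i + 1)"
      using that unfolding lanczos_T_def by auto
    moreover have "Suc i + 1 \<in> {2..k}" using that by auto
    ultimately show ?thesis using assms(7) by auto
  qed
  obtain i where i: "i < n" "b $ i \<noteq> 0"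
    using assms(3,4) by (metis eq_vecI carrier_vecD index_zero_vec(1) index_zero_vec(2))
  have "b \<bullet> b = (\<Sum>j\<in>{0..<n}. b$j * b$j)" using assms(3) by (simp add: scalar_prod_def)
  also have "\<dots> > 0" using i by (intro sum_pos2[of _ i]) (auto simp: zero_less_mult_iff)
  finally have c: "vnorm b > 0" unfolding vnorm_def by simp
  show ?thesis
    using part1[OF T sym tri sub assms(6) c assms(5)] not_hard[OF T sym tri sub assms(6) c assms(5)]
    by simp
qed

end
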